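(* If Assumptions 1 and 3 hold, there exists $\nu_{\rm SMON}$ such that $F_\nu$ is strongly monotone on $\mathcal{X}$ for all $\nu>\nu_{\rm SMON}$.
   Context: Let $N,n$ be positive integers; for $i\in\{1,\dots,N\}$, $\mathcal{X}^i\subset\mathbb{R}^n$ is convex, compact with non-empty interior; $\mathcal{X}=\mathcal{X}^1\times\dots\times\mathcal{X}^N$, $x=[x^1;\dots;x^N]$. Costs $J^i(z_1,z_2):\mathcal{X}^i\times\mathrm{conv}(\mathcal{X}^1,\dots,\mathcal{X}^N)\to\mathbb{R}$ are continuously differentiable, with $x^i\mapsto J^i(x^i,\frac1N\sum_jx^j)$ convex for each fixed $x^{-i}$. $T\in[0,1]^{N\times N}$. Define $\sigma_\infty(x)=\frac1N\sum_jx^j$, $\sigma^i_\nu(x)=\sum_j[T^\nu]_{ij}x^j$, $F_\infty(x)=[\nabla_{z_1}J^i(x^i,\sigma_\infty(x))+\frac1N\nabla_{z_2}J^i(x^i,\sigma_\infty(x))]_{i=1}^N$ (the gradient in $x^i$ of $x^i\mapsto J^i(x^i,\sigma_\infty(x))$), and $F_\nu(x)=[\nabla_{z_1}J^i(x^i,\sigma^i_\nu(x))+[T^\nu]_{ii}\nabla_{z_2}J^i(x^i,\sigma^i_\nu(x))]_{i=1}^N$. An operator $H$ is strongly monotone on $\mathcal{X}$ if there is $\alpha>0$ with $(H(x)-H(y))^\top(x-y)\ge\alpha\|x-y\|^2$ for all $x,y\in\mathcal{X}$. Assumption 1: $T$ is primitive and doubly stochastic. Assumption 3: each $J^i$ is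 twice continuously differentiable and $F_\infty$ is strongly monotone on $\mathcal{X}$. *)

theory Defs
  imports "HOL-Analysis.Analysis"
begin

text \<open>Agents are indexed by a finite type 'i (N = CARD('i)); each local decision
 lives in real^'n (n = CARD('n)). A profile x is real^'n^'i, x $ i = x^i.\<close>

definition matpow :: "real^'i^'i \<Rightarrow> nat \<Rightarrow> real^'i^'i" where
  "matpow T k = ((\<lambda>A. T ** A) ^^ k) (mat 1)"

definition doubly_stochastic :: "real^'i^'i \<Rightarrow> bool" where
  "doubly_stochastic T \<longleftrightarrow> (\<forall>i j. T $ i $ j \<ge> 0)
     \<and> (\<forall>i. (\<Sum>j\<in>UNIV. T $ i $ j) = 1) \<and> (\<forall>j. (\<Sum>i\<in>UNIV. T $ i $ j) = 1)"

definition primitive :: "real^'i^'i \<Rightarrow> bool" where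
  "primitive T \<longleftrightarrow> (\<forall>i j. T $ i $ j \<ge> 0) \<and> (\<exists>k. \<forall>i j. matpow T k $ i $ j > 0)"

definition strongly_monotone_on :: "'a::real_inner set \<Rightarrow> ('a \<Rightarrow> 'a) \<Rightarrow> bool" where
  "strongly_monotone_on S H \<longleftrightarrow>
     (\<exists>\<alpha>>0. \<forall>x\<in>S. \<forall>y\<in>S. (H x - H y) \<bullet> (x - y) \<ge> \<alpha> * (norm (x - y))\<^sup>2)"

definition C1_grad_on :: "'a::real_inner set \<Rightarrow> ('a \<Rightarrow> real) \<Rightarrow> ('a \<Rightarrow> 'a) \<Rightarrow> bool" where
  "C1_grad_on S f g \<longleftrightarrow>
     (\<forall>z\<in>S. (f has_derivative (\<lambda>h. g z \<bullet> h)) (at z within S)) \<and> continuous_on S g"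

definition C1_map_on :: "'a::real_normed_vector set \<Rightarrow> ('a \<Rightarrow> 'b::real_normed_vector) \<Rightarrow> bool" where
  "C1_map_on S g \<longleftrightarrow> (\<exists>g'. (\<forall>z\<in>S. (g has_derivative blinfun_apply (g' z)) (at z within S))
                         \<and> continuous_on S g')"

definition sigma_inf :: "real^'n^'i \<Rightarrow> real^'n" where
  "sigma_inf x = (1 / real CARD('i)) *\<^sub>R (\<Sum>j\<in>UNIV. x $ j)"

definition sigma_nu :: "real^'i^'i \<Rightarrow> nat \<Rightarrow> real^'n^'i \<Rightarrow> 'i \<Rightarrow> real^'n" where
  "sigma_nu T \<nu> x i = (\<Sum>j\<in>UNIV. matpow T \<nu> $ i $ j *\<^sub>R x $ j)"

text \<open>G i (z1,z2) = (grad_{z1} J^i, grad_{z2} J^i).\<close>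
definition F_inf :: "('i \<Rightarrow> (real^'n) \<times> (real^'n) \<Rightarrow> (real^'n) \<times> (real^'n)) \<Rightarrow> real^'n^'i \<Rightarrow> real^'n^'i" where
  "F_inf G x = (\<chi> i. fst (G i (x $ i, sigma_inf x))
                     + (1 / real CARD('i)) *\<^sub>R snd (G i (x $ i, sigma_inf x)))"

definition F_nu :: "real^'i^'i \<Rightarrow> nat \<Rightarrow> ('i \<Rightarrow> (real^'n) \<times> (real^'n) \<Rightarrow> (real^'n) \<times> (real^'n))
                    \<Rightarrow> real^'n^'i \<Rightarrow> real^'n^'i" where
  "F_nu T \<nu> G x = (\<chi> i. fst (G i (x $ i, sigma_nu T \<nu> x i))
                     + matpow T \<nu> $ i $ i *\<^sub>R snd (G i (x $ i, sigma_nu T \<nu> x i)))"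

end

theory Submission
  imports Defs
begin

definition rowstoch :: "real^'i^'i \<Rightarrow> bool" where
  "rowstoch M \<longleftrightarrow> (\<forall>i j. 0 \<le> M $ i $ j) \<and> (\<forall>i. (\<Sum>j\<in>UNIV. M $ i $ j) = 1)"
definition colstoch :: "real^'i^'i \<Rightarrow> bool" where
  "colstoch M \<longleftrightarrow> (\<forall>j. (\<Sum>i\<in>UNIV. M $ i $ j) = 1)"

lemma matpow_Suc: "matpow T (Suc k) = T ** matpow T k"
  by (simp add: matpow_def)
lemma matpow_0: "matpow T 0 = mat 1"
  by (simp add: matpow_def)
lemma matpow_add: "matpow T (a + b) = matpow T a ** matpow T b"
  by (induction a) (simp_all add: matpow_Suc matpow_0 matrix_mul_lid matrix_mul_assoc)

lemma rowstoch_mult: "rowstoch A \<Longrightarrow> rowstoch B \<Longrightarrow> rowstoch (A ** B)"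
  unfolding rowstoch_def matrix_matrix_mult_def
  by (simp add: sum_nonneg sum.swap[of _ UNIV UNIV] flip: sum_distrib_left)
lemma colstoch_mult: "colstoch A \<Longrightarrow> colstoch B \<Longrightarrow> colstoch (A ** B)"
  unfolding colstoch_def matrix_matrix_mult_def
  by (simp add: sum.swap[of _ UNIV UNIV] flip: sum_distrib_right)
lemma rowstoch_mat1: "rowstoch (mat 1 :: real^'i^'i)"
  unfolding rowstoch_def mat_def by (simp add: if_distrib)
lemma colstoch_mat1: "colstoch (mat 1 :: real^'i^'i)"
  unfolding colstoch_def mat_def by (simp add: if_distrib)
lemma rowstoch_le1: "rowstoch M \<Longrightarrow> M $ i $ j \<le> 1"
proof -
  assume a: "rowstoch M"
  have "M $ i $ j \<le> (\<Sum>j\<in>UNIV. M $ i $ j)"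
    by (rule member_le_sum) (use a in \<open>auto simp: rowstoch_def\<close>)
  then show ?thesis using a by (simp add: rowstoch_def)
qed

lemma matpow_rowstoch: "rowstoch T \<Longrightarrow> rowstoch (matpow T k)"
  by (induction k) (simp_all add: matpow_Suc matpow_0 rowstoch_mat1 rowstoch_mult)
lemma matpow_colstoch: "colstoch T \<Longrightarrow> colstoch (matpow T k)"
  by (induction k) (simp_all add: matpow_Suc matpow_0 colstoch_mat1 colstoch_mult)

lemma interval_pres:
  assumes "rowstoch Q" "\<And>l. a \<le> B $ l $ j \<and> B $ l $ j \<le> b"
  shows "a \<le> (Q ** B) $ i $ j \<and> (Q ** B) $ i $ j \<le> b"
proof -
  have s: "(\<Sum>l\<in>UNIV. Q $ i $ l) = 1" and nn: "\<And>l. 0 \<le> Q $ i $ l" using assms(1) by (auto simp: rowstoch_def)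
  have "(\<Sum>l\<in>UNIV. Q $ i $ l * a) \<le> (\<Sum>l\<in>UNIV. Q $ i $ l * B $ l $ j)"
    by (rule sum_mono) (simp add: assms(2) mult_left_mono nn)
  moreover have "(\<Sum>l\<in>UNIV. Q $ i $ l * B $ l $ j) \<le> (\<Sum>l\<in>UNIV. Q $ i $ l * b)"
    by (rule sum_mono) (simp add: assms(2) mult_left_mono nn)
  ultimately show ?thesis unfolding matrix_matrix_mult_def
    by (simp add: s flip: sum_distrib_right)
qed

lemma contract:
  assumes "rowstoch Q" "\<And>i l. \<gamma> \<le> Q $ i $ l" "\<And>l. a \<le> B $ l $ j \<and> B $ l $ j \<le> b"
  shows "a + \<gamma> * (B $ l0 $ j - a) \<le> (Q ** B) $ i $ j \<and> (Q ** B) $ i $ j \<le> b - \<gamma> * (b - B $ l0 $ j)"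
proof -
  have s: "(\<Sum>l\<in>UNIV. Q $ i $ l) = 1" and nn: "\<And>l. 0 \<le> Q $ i $ l" using assms(1) by (auto simp: rowstoch_def)
  have e1: "b - (Q ** B) $ i $ j = (\<Sum>l\<in>UNIV. Q $ i $ l * (b - B $ l $ j))"
    unfolding matrix_matrix_mult_def by (simp add: right_diff_distrib sum_subtractf s flip: sum_distrib_right)
  have e2: "(Q ** B) $ i $ j - a = (\<Sum>l\<in>UNIV. Q $ i $ l * (B $ l $ j - a))"
    unfolding matrix_matrix_mult_def by (simp add: right_diff_distrib sum_subtractf s flip: sum_distrib_right)
  have "Q $ i $ l0 * (b - B $ l0 $ j) \<le> (\<Sum>l\<in>UNIV. Q $ i $ l * (b - B $ l $ j))"
    by (rule member_le_sum) (auto simp: nn assms(3))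
  moreover have "\<gamma> * (b - B $ l0 $ j) \<le> Q $ i $ l0 * (b - B $ l0 $ j)"
    by (rule mult_right_mono) (auto simp: assms)
  moreover have "Q $ i $ l0 * (B $ l0 $ j - a) \<le> (\<Sum>l\<in>UNIV. Q $ i $ l * (B $ l $ j - a))"
    by (rule member_le_sum) (auto simp: nn assms(3))
  moreover have "\<gamma> * (B $ l0 $ j - a) \<le> Q $ i $ l0 * (B $ l0 $ j - a)"
    by (rule mult_right_mono) (auto simp: assms)
  ultimately show ?thesis using e1 e2 by linarith
qed

lemma propagate:
  assumes "rowstoch T" "\<And>l. a \<le> matpow T n0 $ l $ j \<and> matpow T n0 $ l $ j \<le> b"
  shows "a \<le> matpow T (n0 + d) $ l $ j \<and> matpow T (n0 + d) $ l $ j \<le> b"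
proof (induction d arbitrary: l)
  case 0 then show ?case using assms(2) by simp
next
  case (Suc d)
  then show ?case using interval_pres[OF assms(1), of a "matpow T (n0 + d)" j b]
    by (simp add: matpow_Suc)
qed

lemma fin_pos_lb: "finite A \<Longrightarrow> (\<forall>x\<in>A. 0 < (f x::real)) \<Longrightarrow> \<exists>g>0. \<forall>x\<in>A. g \<le> f x"
proof (induction rule: finite_induct)
  case empty show ?case by (auto intro: exI[of _ 1])
next
  case (insert x F)
  then obtain g where "g > 0" "\<forall>y\<in>F. g \<le> f y" by auto
  then show ?case using insert.prems by (intro exI[of _ "min g (f x)"]) auto
qed

lemma matpow_conv:
  fixes T :: "real^'i::finite^'i"
  assumes rs: "rowstoch T" and cs: "colstoch T" and pr: "\<exists>k. \<forall>i j. matpow T k $ i $ j > 0" and dp: "\<delta> > 0"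
  shows "\<exists>\<nu>0. \<forall>\<nu>\<ge>\<nu>0. \<forall>i j. \<bar>matpow T \<nu> $ i $ j - 1 / real CARD('i)\<bar> \<le> \<delta>"
proof -
  obtain k where kp: "\<And>i j. matpow T k $ i $ j > 0" using pr by blast
  define Q where "Q = matpow T k"
  obtain \<gamma> where gpos: "\<gamma> > 0" and gle0: "\<forall>p\<in>(UNIV::('i\<times>'i) set). \<gamma> \<le> (\<lambda>(i,j). Q $ i $ j) p"
    using fin_pos_lb[of "UNIV::('i\<times>'i) set" "\<lambda>(i,j). Q $ i $ j"] kp unfolding Q_def by auto
  have gle: "\<gamma> \<le> Q $ i $ j" for i j using gle0 by auto
  have Qrs: "rowstoch Q" unfolding Q_def by (rule matpow_rowstoch[OF rs])
  have g1: "\<gamma> \<le> 1" using gle[of undefined undefined] rowstoch_le1[OF Qrs, of undefined undefined] by linarith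
  have S: "\<exists>a b. b - a \<le> (1 - \<gamma>) ^ m \<and> (\<forall>l. a \<le> matpow T (m * k) $ l $ j \<and> matpow T (m * k) $ l $ j \<le> b)" for m j
  proof (induction m)
    case 0
    have "rowstoch (matpow T 0)" by (rule matpow_rowstoch[OF rs])
    then show ?case using rowstoch_le1[of "matpow T 0"]
      by (intro exI[of _ 0] exI[of _ 1]) (auto simp: rowstoch_def)
  next
    case (Suc m)
    then obtain a b where ab: "b - a \<le> (1 - \<gamma>) ^ m" "\<And>l. a \<le> matpow T (m * k) $ l $ j \<and> matpow T (m * k) $ l $ j \<le> b" by blast
    define B where "B = matpow T (m * k)"
    have e: "matpow T (Suc m * k) = Q ** B" by (simp add: Q_def B_def flip: matpow_add)
    define c where "c = B $ undefined $ j"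
    have c: "a \<le> c" "c \<le> b" using ab(2) by (auto simp: c_def B_def)
    have "(b - \<gamma> * (b - c)) - (a + \<gamma> * (c - a)) = (1 - \<gamma>) * (b - a)" by (simp add: algebra_simps)
    also have "\<dots> \<le> (1 - \<gamma>) * (1 - \<gamma>) ^ m" by (rule mult_left_mono) (use ab g1 in auto)
    finally have len: "(b - \<gamma> * (b - c)) - (a + \<gamma> * (c - a)) \<le> (1 - \<gamma>) ^ Suc m" by simp
    have bnd: "\<forall>l. a + \<gamma> * (c - a) \<le> matpow T (Suc m * k) $ l $ j \<and> matpow T (Suc m * k) $ l $ j \<le> b - \<gamma> * (b - c)"
      unfolding e c_def using contract[OF Qrs gle, of a B j b undefined] ab(2) unfolding B_def by blast
    show ?case using len bnd by blast
  qed
  obtain m where m: "(1 - \<gamma>) ^ m < \<delta>" using real_arch_pow_inv[OF dp, of "1 - \<gamma>"] gpos by auto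
  have "\<bar>matpow T \<nu> $ i $ j - 1 / real CARD('i)\<bar> \<le> \<delta>" if nu: "\<nu> \<ge> m * k" for \<nu> i j
  proof -
    obtain a b where ab: "b - a \<le> (1 - \<gamma>) ^ m" "\<And>l. a \<le> matpow T (m * k) $ l $ j \<and> matpow T (m * k) $ l $ j \<le> b"
      using S by blast
    obtain d where d: "\<nu> = m * k + d" using le_Suc_ex[OF nu] by blast
    have bd: "a \<le> matpow T \<nu> $ l $ j \<and> matpow T \<nu> $ l $ j \<le> b" for l
      using propagate[OF rs ab(2), of d l] unfolding d .
    have Npos: "0 < real CARD('i)" by simp
    have sum1: "(\<Sum>l\<in>UNIV. matpow T \<nu> $ l $ j) = 1" using matpow_colstoch[OF cs] by (simp add: colstoch_def)
    have "(\<Sum>l\<in>(UNIV::'i set). a) \<le> (\<Sum>l\<in>UNIV. matpow T \<nu> $ l $ j)" by (rule sum_mono) (use bd in auto)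
    hence "real CARD('i) * a \<le> 1" using sum1 by simp
    hence A: "a \<le> 1 / real CARD('i)" using Npos by (simp add: pos_le_divide_eq mult.commute)
    have "(\<Sum>l\<in>UNIV. matpow T \<nu> $ l $ j) \<le> (\<Sum>l\<in>(UNIV::'i set). b)" by (rule sum_mono) (use bd in auto)
    hence "1 \<le> real CARD('i) * b" using sum1 by simp
    hence B: "1 / real CARD('i) \<le> b" using Npos by (simp add: pos_divide_le_eq mult.commute)
    show ?thesis unfolding abs_le_iff using A B bd[of i] ab(1) m by linarith
  qed
  then show ?thesis by blast
qed


lemma lip_lemma:
  fixes g :: "'c::real_normed_vector \<Rightarrow> 'd::real_normed_vector"
  assumes K: "compact K" and g: "C1_map_on K g"
  shows "\<exists>B\<ge>0.
    (\<forall>X (P::'a::{real_normed_vector,perfect_space} \<Rightarrow>\<^sub>L 'c) x y. convex X \<longrightarrow> (\<forall>z\<in>X. blinfun_apply P z \<in> K) \<longrightarrow> x \<in> X \<longrightarrow> y \<in> X \<longrightarrow>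
        norm (g (P x) - g (P y)) \<le> B * norm P * norm (x - y)) \<and>
    (\<forall>\<eta>>0. \<exists>d>0. \<forall>X (P::'a \<Rightarrow>\<^sub>L 'c) Q x y. convex X \<longrightarrow>
        (\<forall>z\<in>X. blinfun_apply P z \<in> K \<and> blinfun_apply Q z \<in> K \<and> norm (P z - Q z) < d) \<longrightarrow> x \<in> X \<longrightarrow> y \<in> X \<longrightarrow>
        norm (g (P x) - g (Q x) - (g (P y) - g (Q y))) \<le> (\<eta> * norm P + B * norm (P - Q)) * norm (x - y))"
proof -
  obtain g' where gd: "\<And>z. z \<in> K \<Longrightarrow> (g has_derivative blinfun_apply (g' z)) (at z within K)"
    and gc: "continuous_on K g'" using g unfolding C1_map_on_def by blast
  have "bounded (g' ` K)" by (rule compact_imp_bounded[OF compact_continuous_image[OF gc K]])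
  then obtain B0 where B0: "\<And>z. z \<in> K \<Longrightarrow> norm (g' z) \<le> B0" unfolding bounded_iff by blast
  define B where "B = max B0 0"
  have B: "\<And>z. z \<in> K \<Longrightarrow> norm (g' z) \<le> B" "B \<ge> 0" using B0 unfolding B_def by force+
  have uc: "uniformly_continuous_on K g'" by (rule compact_uniformly_continuous[OF gc K])
  have comp: "((\<lambda>z. g (blinfun_apply P z)) has_derivative (\<lambda>y. blinfun_apply (g' (P x)) (blinfun_apply P y))) (at x within X)"
    if "\<forall>z\<in>X. blinfun_apply P z \<in> K" "x \<in> X" for P :: "'a \<Rightarrow>\<^sub>L 'c" and X x
    by (rule has_derivative_in_compose2[of K g "\<lambda>z. blinfun_apply (g' z)"])
       (use that gd in \<open>auto intro: bounded_linear.has_derivative[OF blinfun.bounded_linear_right] has_derivative_ident\<close>)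
  have part1: "norm (g (P x) - g (P y)) \<le> B * norm P * norm (x - y)"
    if X: "convex X" "\<forall>z\<in>X. blinfun_apply P z \<in> K" "x \<in> X" "y \<in> X" for X and P :: "'a \<Rightarrow>\<^sub>L 'c" and x y
  proof -
    have "norm ((\<lambda>z. g (blinfun_apply P z)) x - (\<lambda>z. g (blinfun_apply P z)) y) \<le> (B * norm P) * norm (x - y)"
    proof (rule differentiable_bound[OF X(1)])
      fix z assume z: "z \<in> X"
      show "((\<lambda>z. g (blinfun_apply P z)) has_derivative (\<lambda>y. blinfun_apply (g' (P z)) (blinfun_apply P y))) (at z within X)"
        by (rule comp[OF X(2) z])
      show "onorm (\<lambda>y. blinfun_apply (g' (P z)) (blinfun_apply P y)) \<le> B * norm P"
      proof (rule onorm_le)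
        fix y
        have "norm (blinfun_apply (g' (P z)) (blinfun_apply P y)) \<le> norm (g' (P z)) * norm (blinfun_apply P y)"
          by (rule norm_blinfun)
        also have "\<dots> \<le> B * (norm P * norm y)"
          by (rule mult_mono) (use B X(2) z norm_blinfun in auto)
        finally show "norm (blinfun_apply (g' (P z)) (blinfun_apply P y)) \<le> B * norm P * norm y" by (simp add: mult.assoc)
      qed
    qed (use X in auto)
    then show ?thesis by simp
  qed
  have part2: "\<exists>d>0. \<forall>X (P::'a \<Rightarrow>\<^sub>L 'c) Q x y. convex X \<longrightarrow>
        (\<forall>z\<in>X. blinfun_apply P z \<in> K \<and> blinfun_apply Q z \<in> K \<and> norm (P z - Q z) < d) \<longrightarrow> x \<in> X \<longrightarrow> y \<in> X \<longrightarrow>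
        norm (g (P x) - g (Q x) - (g (P y) - g (Q y))) \<le> (\<eta> * norm P + B * norm (P - Q)) * norm (x - y)"
    if eta: "\<eta> > 0" for \<eta>
  proof -
    obtain d where d: "d > 0" "\<And>u v. u \<in> K \<Longrightarrow> v \<in> K \<Longrightarrow> dist v u < d \<Longrightarrow> dist (g' v) (g' u) < \<eta>"
      using uc eta unfolding uniformly_continuous_on_def by metis
    show ?thesis
    proof (intro exI[of _ d] conjI allI impI d(1))
      fix X and P Q :: "'a \<Rightarrow>\<^sub>L 'c" and x y
      assume X: "convex X" "\<forall>z\<in>X. blinfun_apply P z \<in> K \<and> blinfun_apply Q z \<in> K \<and> norm (P z - Q z) < d"
        and x: "x \<in> X" and y: "y \<in> X"
      have XP: "\<forall>z\<in>X. blinfun_apply P z \<in> K" and XQ: "\<forall>z\<in>X. blinfun_apply Q z \<in> K" using X(2) by auto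
      have "norm ((\<lambda>z. g (P z) - g (Q z)) x - (\<lambda>z. g (P z) - g (Q z)) y) \<le> (\<eta> * norm P + B * norm (P - Q)) * norm (x - y)"
      proof (rule differentiable_bound[OF X(1)])
        fix z assume z: "z \<in> X"
        show "((\<lambda>z. g (P z) - g (Q z)) has_derivative
               (\<lambda>y. blinfun_apply (g' (P z)) (blinfun_apply P y) - blinfun_apply (g' (Q z)) (blinfun_apply Q y))) (at z within X)"
          by (rule has_derivative_diff[OF comp[OF XP z] comp[OF XQ z]])
        have nd: "norm (g' (P z) - g' (Q z)) \<le> \<eta>"
          using d(2)[of "Q z" "P z"] X(2) z by (auto simp: dist_norm)
        show "onorm (\<lambda>y. blinfun_apply (g' (P z)) (blinfun_apply P y) - blinfun_apply (g' (Q z)) (blinfun_apply Q y))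
              \<le> \<eta> * norm P + B * norm (P - Q)"
        proof (rule onorm_le)
          fix y
          have e: "blinfun_apply (g' (P z)) (blinfun_apply P y) - blinfun_apply (g' (Q z)) (blinfun_apply Q y)
              = blinfun_apply (g' (P z) - g' (Q z)) (blinfun_apply P y) + blinfun_apply (g' (Q z)) (blinfun_apply (P - Q) y)"
            by (simp add: blinfun.diff_left blinfun.diff_right)
          have n1: "norm (blinfun_apply (g' (P z) - g' (Q z)) (blinfun_apply P y)) \<le> \<eta> * (norm P * norm y)"
          proof -
            have "norm (blinfun_apply (g' (P z) - g' (Q z)) (blinfun_apply P y)) \<le> norm (g' (P z) - g' (Q z)) * norm (blinfun_apply P y)"
              by (rule norm_blinfun)
            also have "\<dots> \<le> \<eta> * (norm P * norm y)" by (rule mult_mono) (use nd norm_blinfun eta in auto)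
            finally show ?thesis .
          qed
          have n2: "norm (blinfun_apply (g' (Q z)) (blinfun_apply (P - Q) y)) \<le> B * (norm (P - Q) * norm y)"
          proof -
            have "norm (blinfun_apply (g' (Q z)) (blinfun_apply (P - Q) y)) \<le> norm (g' (Q z)) * norm (blinfun_apply (P - Q) y)"
              by (rule norm_blinfun)
            also have "\<dots> \<le> B * (norm (P - Q) * norm y)" by (rule mult_mono) (use B XQ z norm_blinfun in auto)
            finally show ?thesis .
          qed
          show "norm (blinfun_apply (g' (P z)) (blinfun_apply P y) - blinfun_apply (g' (Q z)) (blinfun_apply Q y))
                \<le> (\<eta> * norm P + B * norm (P - Q)) * norm y"
            unfolding e using norm_triangle_le[OF add_mono[OF n1 n2]] by (simp add: algebra_simps)
        qed
      qed (use x y in auto)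
      then show "norm (g (P x) - g (Q x) - (g (P y) - g (Q y))) \<le> (\<eta> * norm P + B * norm (P - Q)) * norm (x - y)" by simp
    qed
  qed
  show ?thesis using part1 part2 B(2) by blast
qed


definition PhiB :: "real^'i^'i \<Rightarrow> 'i \<Rightarrow> ((real^'n^'i) \<Rightarrow>\<^sub>L ((real^'n) \<times> (real^'n)))" where
  "PhiB M i = Blinfun (\<lambda>x. (x $ i, \<Sum>j\<in>UNIV. M $ i $ j *\<^sub>R x $ j))"

definition Emat :: "real^'i::finite^'i" where "Emat = (\<chi> i j. 1 / real CARD('i))"

definition Fg :: "real^'i^'i \<Rightarrow> ('i \<Rightarrow> (real^'n) \<times> (real^'n) \<Rightarrow> (real^'n) \<times> (real^'n)) \<Rightarrow> real^'n^'i \<Rightarrow> real^'n^'i" where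
  "Fg M G x = (\<chi> i. fst (G i (PhiB M i x)) + M $ i $ i *\<^sub>R snd (G i (PhiB M i x)))"

lemma PhiB_apply: fixes M :: "real^'i::finite^'i" shows "blinfun_apply (PhiB M i) x = (x $ i, \<Sum>j\<in>UNIV. M $ i $ j *\<^sub>R x $ j)"
proof -
  have "bounded_linear (\<lambda>x::real^'n^'i. (x $ i, \<Sum>j\<in>UNIV. M $ i $ j *\<^sub>R x $ j))"
    by (intro bounded_linear_Pair bounded_linear_vec_nth bounded_linear_sum
        bounded_linear_compose[OF bounded_linear_scaleR_right bounded_linear_vec_nth])
  note e = bounded_linear_Blinfun_apply[OF this]
  show ?thesis unfolding PhiB_def e by simp
qed

lemma Fg_nu: "F_nu T \<nu> G = Fg (matpow T \<nu>) G"
  by (rule ext) (simp add: F_nu_def Fg_def PhiB_apply sigma_nu_def)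

lemma Fg_inf: "F_inf G = Fg Emat G"
  by (rule ext) (simp add: F_inf_def Fg_def PhiB_apply sigma_inf_def Emat_def scaleR_sum_right)

lemma Emat_rowstoch: "rowstoch (Emat :: real^'i::finite^'i)"
  unfolding rowstoch_def Emat_def by simp

lemma sum_bound:
  fixes x :: "real^'n::finite^'i::finite"
  assumes "\<And>j. \<bar>c j\<bar> \<le> \<delta>"
  shows "norm (\<Sum>j\<in>UNIV. c j *\<^sub>R x $ j) \<le> real CARD('i) * \<delta> * norm x"
proof -
  have d0: "0 \<le> \<delta>" using assms[of undefined] by linarith
  have "norm (\<Sum>j\<in>UNIV. c j *\<^sub>R x $ j) \<le> (\<Sum>j\<in>UNIV. norm (c j *\<^sub>R x $ j))" by (rule norm_sum)
  also have "\<dots> \<le> (\<Sum>j\<in>(UNIV::'i set). \<delta> * norm x)"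
    by (rule sum_mono) (use d0 in \<open>auto intro!: mult_mono Finite_Cartesian_Product.norm_nth_le simp: assms\<close>)
  finally show ?thesis by simp
qed

lemma PhiB_norm:
  assumes "\<And>j. \<bar>M $ i $ j\<bar> \<le> c" "c \<ge> 0"
  shows "norm (PhiB M i :: (real^'n::finite^'i::finite) \<Rightarrow>\<^sub>L _) \<le> 1 + real CARD('i) * c"
proof (rule norm_blinfun_bound)
  show "0 \<le> 1 + real CARD('i) * c" using assms by simp
  fix x :: "real^'n^'i"
  have "norm (blinfun_apply (PhiB M i) x) \<le> norm (x $ i) + norm (\<Sum>j\<in>UNIV. M $ i $ j *\<^sub>R x $ j)"
    unfolding PhiB_apply by (rule norm_Pair_le)
  also have "\<dots> \<le> norm x + real CARD('i) * c * norm x"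
  proof -
    have "norm (\<Sum>j\<in>UNIV. M $ i $ j *\<^sub>R x $ j) \<le> real CARD('i) * c * norm x"
      by (rule sum_bound) (use assms in auto)
    moreover have "norm (x $ i) \<le> norm x" by (rule Finite_Cartesian_Product.norm_nth_le)
    ultimately show ?thesis by linarith
  qed
  finally show "norm (blinfun_apply (PhiB M i) x) \<le> (1 + real CARD('i) * c) * norm x" by (simp add: algebra_simps)
qed

lemma PhiB_diff_apply:
  "blinfun_apply (PhiB M i - PhiB M' i) x = (0, \<Sum>j\<in>UNIV. (M $ i $ j - M' $ i $ j) *\<^sub>R x $ j)"
  by (simp add: blinfun.diff_left PhiB_apply scaleR_diff_left sum_subtractf)

lemma PhiB_diff_norm:
  assumes "\<And>j. \<bar>M $ i $ j - M' $ i $ j\<bar> \<le> \<delta>"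
  shows "norm (blinfun_apply (PhiB M i - PhiB M' i) (x :: real^'n::finite^'i::finite)) \<le> real CARD('i) * \<delta> * norm x"
  unfolding PhiB_diff_apply using sum_bound[of "\<lambda>j. M $ i $ j - M' $ i $ j" \<delta> x, OF assms]
  by (simp add: norm_Pair)

lemma PhiB_diff_norm2:
  assumes "\<And>j. \<bar>M $ i $ j - M' $ i $ j\<bar> \<le> \<delta>" "\<delta> \<ge> 0"
  shows "norm (PhiB M i - PhiB M' i :: (real^'n::finite^'i::finite) \<Rightarrow>\<^sub>L _) \<le> real CARD('i) * \<delta>"
  by (rule norm_blinfun_bound) (use assms PhiB_diff_norm[OF assms(1)] in auto)

lemma per_i:
  fixes X :: "(real^'n::finite^'i::finite) set" and G :: "'i \<Rightarrow> (real^'n) \<times> (real^'n) \<Rightarrow> (real^'n) \<times> (real^'n)"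
    and K :: "((real^'n) \<times> (real^'n)) set"
  assumes Xc: "convex X" and XR: "\<forall>x\<in>X. norm x \<le> R"
    and KX: "\<forall>M. rowstoch M \<longrightarrow> (\<forall>x\<in>X. blinfun_apply (PhiB M i) x \<in> K)"
    and K: "compact K" and g: "C1_map_on K (G i)" and e: "\<epsilon> > 0"
  shows "\<exists>\<delta>>0. \<forall>M. rowstoch M \<longrightarrow> (\<forall>j. \<bar>M $ i $ j - Emat $ i $ j\<bar> \<le> \<delta>) \<longrightarrow>
     (\<forall>x\<in>X. \<forall>y\<in>X. norm ((Fg M G x - Fg Emat G x) $ i - (Fg M G y - Fg Emat G y) $ i) \<le> \<epsilon> * norm (x - y))"
proof -
  obtain B where B0: "B \<ge> 0"
    and L1: "\<And>X (P::(real^'n^'i) \<Rightarrow>\<^sub>L _) x y. convex X \<Longrightarrow> (\<forall>z\<in>X. blinfun_apply P z \<in> K) \<Longrightarrow> x \<in> X \<Longrightarrow> y \<in> X \<Longrightarrow>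
        norm (G i (P x) - G i (P y)) \<le> B * norm P * norm (x - y)"
    and L2: "\<And>\<eta>. \<eta> > 0 \<Longrightarrow> \<exists>d>0. \<forall>X (P::(real^'n^'i) \<Rightarrow>\<^sub>L _) Q x y. convex X \<longrightarrow>
        (\<forall>z\<in>X. blinfun_apply P z \<in> K \<and> blinfun_apply Q z \<in> K \<and> norm (P z - Q z) < d) \<longrightarrow> x \<in> X \<longrightarrow> y \<in> X \<longrightarrow>
        norm (G i (P x) - G i (Q x) - (G i (P y) - G i (Q y))) \<le> (\<eta> * norm P + B * norm (P - Q)) * norm (x - y)"
    using lip_lemma[OF K g, where 'a="real^'n^'i"] by blast
  define N where "N = real CARD('i)"
  have Npos: "N > 0" "N \<ge> 1" unfolding N_def by (simp_all add: Suc_leI)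
  define \<eta> where "\<eta> = \<epsilon> / (4 * (1 + N))"
  have eta: "\<eta> > 0" "2 * \<eta> * (1 + N) = \<epsilon> / 2" unfolding \<eta>_def using e Npos by (auto simp: field_simps)
  obtain d where d: "d > 0" and L2d: "\<And>X (P::(real^'n^'i) \<Rightarrow>\<^sub>L _) Q x y. convex X \<Longrightarrow>
        (\<forall>z\<in>X. blinfun_apply P z \<in> K \<and> blinfun_apply Q z \<in> K \<and> norm (P z - Q z) < d) \<Longrightarrow> x \<in> X \<Longrightarrow> y \<in> X \<Longrightarrow>
        norm (G i (P x) - G i (Q x) - (G i (P y) - G i (Q y))) \<le> (\<eta> * norm P + B * norm (P - Q)) * norm (x - y)"
    using L2[OF eta(1)] by blast
  define R' where "R' = max R 0"
  have R': "R' \<ge> 0" "\<forall>x\<in>X. norm x \<le> R'" using XR unfolding R'_def by force+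
  define \<delta>1 where "\<delta>1 = d / (2 * (N * R' + 1))"
  define \<delta>2 where "\<delta>2 = \<epsilon> / (2 * (B * (3 * N + 1) + 1))"
  define \<delta> where "\<delta> = min \<delta>1 \<delta>2"
  have dpos: "\<delta>1 > 0" "\<delta>2 > 0" unfolding \<delta>1_def \<delta>2_def using d e Npos R' B0
    by (auto intro!: divide_pos_pos add_nonneg_pos mult_nonneg_nonneg)
  have dp: "\<delta> > 0" using dpos unfolding \<delta>_def by simp
  have d1: "N * \<delta> * R' < d"
  proof -
    have "N * \<delta> * R' \<le> N * \<delta>1 * R'" unfolding \<delta>_def using Npos R'
      by (intro mult_right_mono mult_left_mono) auto
    also have "N * \<delta>1 * R' = d * (N * R') / (2 * (N * R' + 1))" unfolding \<delta>1_def by simp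
    also have "\<dots> < d"
      using d Npos R' by (simp add: divide_less_eq mult_nonneg_nonneg) (smt (verit) mult_left_mono mult_nonneg_nonneg)
    finally show ?thesis .
  qed
  have d2: "\<delta> * (B * (3 * N + 1)) \<le> \<epsilon> / 2"
  proof -
    have hb: "0 \<le> B * (3 * N + 1)" using B0 Npos by simp
    have q: "B * (3 * N + 1) / (B * (3 * N + 1) + 1) \<le> 1" using hb by (simp add: divide_le_eq)
    have "\<delta> * (B * (3 * N + 1)) \<le> \<delta>2 * (B * (3 * N + 1))" unfolding \<delta>_def using Npos B0
      by (intro mult_right_mono) auto
    also have "\<dots> = \<epsilon> / 2 * ((B * (3 * N + 1)) / (B * (3 * N + 1) + 1))" unfolding \<delta>2_def by simp
    also have "\<epsilon> / 2 * ((B * (3 * N + 1)) / (B * (3 * N + 1) + 1)) \<le> \<epsilon> / 2 * 1"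
      using e q by (intro mult_left_mono) auto
    finally show ?thesis by simp
  qed
  show ?thesis
  proof (intro exI[of _ \<delta>] conjI dp allI impI ballI)
    fix M :: "real^'i^'i" and x y
    assume M: "rowstoch M" and Md: "\<forall>j. \<bar>M $ i $ j - Emat $ i $ j\<bar> \<le> \<delta>" and x: "x \<in> X" and y: "y \<in> X"
    define P where "P = (PhiB M i :: (real^'n^'i) \<Rightarrow>\<^sub>L _)"
    define Q where "Q = (PhiB Emat i :: (real^'n^'i) \<Rightarrow>\<^sub>L _)"
    have PK: "\<forall>z\<in>X. blinfun_apply P z \<in> K" using KX M unfolding P_def by blast
    have QK: "\<forall>z\<in>X. blinfun_apply Q z \<in> K" using KX Emat_rowstoch unfolding Q_def by blast
    have Mle: "\<bar>M $ i $ j\<bar> \<le> 1" for j using M rowstoch_le1[OF M, of i j] by (simp add: rowstoch_def)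
    have Ele: "\<bar>(Emat :: real^'i^'i) $ i $ j\<bar> \<le> 1" for j using Npos by (simp add: Emat_def N_def)
    have nP: "norm P \<le> 1 + N" unfolding P_def N_def using PhiB_norm[of M i 1] Mle by simp
    have nQ: "norm Q \<le> 1 + N" unfolding Q_def N_def using PhiB_norm[of Emat i 1] Ele by simp
    have nPQ: "norm (P - Q) \<le> N * \<delta>" unfolding P_def Q_def N_def
      by (rule PhiB_diff_norm2) (use Md dp in auto)
    have close: "\<forall>z\<in>X. norm (P z - Q z) < d"
    proof
      fix z assume z: "z \<in> X"
      have "norm (P z - Q z) = norm (blinfun_apply (PhiB M i - PhiB Emat i) z)"
        unfolding P_def Q_def by (simp add: blinfun.diff_left)
      also have "\<dots> \<le> N * \<delta> * norm z" unfolding N_def by (rule PhiB_diff_norm) (use Md in auto)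
      also have "\<dots> \<le> N * \<delta> * R'" using R' z Npos dp by (intro mult_left_mono) auto
      finally show "norm (P z - Q z) < d" using d1 by linarith
    qed
    define u where "u = G i (P x) - G i (Q x) - (G i (P y) - G i (Q y))"
    define w where "w = G i (Q x) - G i (Q y)"
    define t where "t = norm (x - y)"
    have t0: "t \<ge> 0" unfolding t_def by simp
    have nu: "norm u \<le> (\<eta> * (1 + N) + B * (N * \<delta>)) * t"
    proof -
      have "norm u \<le> (\<eta> * norm P + B * norm (P - Q)) * t"
        unfolding u_def t_def by (rule L2d[OF Xc _ x y]) (use PK QK close in auto)
      also have "\<dots> \<le> (\<eta> * (1 + N) + B * (N * \<delta>)) * t"
        using nP nPQ eta B0 t0 by (intro mult_right_mono add_mono mult_left_mono) auto
      finally show ?thesis .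
    qed
    have nw: "norm w \<le> B * (1 + N) * t"
    proof -
      have "norm w \<le> B * norm Q * t" unfolding w_def t_def by (rule L1[OF Xc QK x y])
      also have "\<dots> \<le> B * (1 + N) * t" using nQ B0 t0 by (intro mult_right_mono mult_left_mono) auto
      finally show ?thesis .
    qed
    have Eii: "(Emat :: real^'i^'i) $ i $ i = 1 / N" by (simp add: Emat_def N_def)
    have expr: "(Fg M G x - Fg Emat G x) $ i - (Fg M G y - Fg Emat G y) $ i
        = fst u + M $ i $ i *\<^sub>R snd u + (M $ i $ i - 1 / N) *\<^sub>R snd w"
      unfolding Fg_def u_def w_def P_def Q_def by (simp add: algebra_simps Eii)
    have "norm (fst u + M $ i $ i *\<^sub>R snd u + (M $ i $ i - 1 / N) *\<^sub>R snd w)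
        \<le> norm (fst u) + \<bar>M $ i $ i\<bar> * norm (snd u) + \<bar>M $ i $ i - 1 / N\<bar> * norm (snd w)"
      by (metis norm_scaleR norm_triangle_le norm_triangle_ineq add_mono order_refl)
    also have "\<dots> \<le> norm u + 1 * norm u + \<delta> * norm w"
      using Mle[of i] Md[rule_format, of i, unfolded Eii] norm_fst_le[of "fst u" "snd u"] norm_snd_le[of "snd u" "fst u"] norm_snd_le[of "snd w" "fst w"]
      by (intro add_mono mult_mono) auto
    also have "\<dots> \<le> 2 * ((\<eta> * (1 + N) + B * (N * \<delta>)) * t) + \<delta> * (B * (1 + N) * t)"
      using nu nw dp by (intro add_mono mult_left_mono) auto
    also have "\<dots> = (2 * \<eta> * (1 + N) + \<delta> * (B * (3 * N + 1))) * t" by (simp add: algebra_simps)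
    also have "\<dots> \<le> (\<epsilon> / 2 + \<epsilon> / 2) * t" using eta d2 t0 by (intro mult_right_mono) auto
    finally show "norm ((Fg M G x - Fg Emat G x) $ i - (Fg M G y - Fg Emat G y) $ i) \<le> \<epsilon> * norm (x - y)"
      unfolding expr t_def by simp
  qed
qed


lemma norm_vec_le_sum: "norm (x :: 'a::real_normed_vector^'i::finite) \<le> (\<Sum>i\<in>UNIV. norm (x $ i))"
  unfolding norm_vec_def by (rule L2_set_le_sum) simp

theorem lemma2:
  fixes Xs :: "'i::finite \<Rightarrow> (real^'n::finite) set"
    and J :: "'i \<Rightarrow> (real^'n) \<times> (real^'n) \<Rightarrow> real"
    and G :: "'i \<Rightarrow> (real^'n) \<times> (real^'n) \<Rightarrow> (real^'n) \<times> (real^'n)"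
    and T :: "real^'i^'i"
  defines "X \<equiv> {x :: real^'n^'i. \<forall>i. x $ i \<in> Xs i}"
    and "C \<equiv> convex hull (\<Union>j. Xs j)"
  assumes Xs_convex: "\<And>i. convex (Xs i)"
    and Xs_compact: "\<And>i. compact (Xs i)"
    and Xs_interior: "\<And>i. interior (Xs i) \<noteq> {}"
    and J_C1: "\<And>i. C1_grad_on (Xs i \<times> C) (J i) (G i)"
    and J_convex: "\<And>i x. x \<in> X \<Longrightarrow>
                 convex_on (Xs i) (\<lambda>t. J i (t, sigma_inf (\<chi> j. if j = i then t else x $ j)))"
    and T_range: "\<And>i j. 0 \<le> T $ i $ j \<and> T $ i $ j \<le> 1"
    and A1: "primitive T \<and> doubly_stochastic T"
    and A3_C2: "\<And>i. C1_map_on (Xs i \<times> C) (G i)"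
    and A3_smon: "strongly_monotone_on X (F_inf G)"
  shows "\<exists>\<nu>0::nat. \<forall>\<nu>>\<nu>0. strongly_monotone_on X (F_nu T \<nu> G)"
proof -
  define N where "N = real CARD('i)"
  have Npos: "N > 0" unfolding N_def by simp
  have Cc: "convex C" unfolding C_def by (rule convex_convex_hull)
  have XsC: "Xs j \<subseteq> C" for j unfolding C_def by (rule subset_trans[OF _ hull_subset]) auto
  have Ccomp: "compact C" unfolding C_def
    by (rule compact_convex_hull) (use Xs_compact in auto)
  have Kcomp: "compact (Xs i \<times> C)" for i by (rule compact_Times[OF Xs_compact Ccomp])
  have Xc: "convex X"
    unfolding convex_def X_def
  proof (intro ballI allI impI, clarsimp)
    fix x y :: "real^'n^'i" and u v :: real and i
    assume "\<forall>i. x $ i \<in> Xs i" "\<forall>i. y $ i \<in> Xs i" "0 \<le> u" "0 \<le> v" "u + v = 1"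
    then show "u *\<^sub>R x $ i + v *\<^sub>R y $ i \<in> Xs i" using Xs_convex[of i] by (simp add: convex_def)
  qed
  have "\<forall>i. \<exists>r. \<forall>z\<in>Xs i. norm z \<le> r"
    using Xs_compact compact_imp_bounded bounded_iff by metis
  then obtain r where r: "\<And>i z. z \<in> Xs i \<Longrightarrow> norm z \<le> r i" by metis
  define R where "R = (\<Sum>i\<in>UNIV. r i)"
  have XR: "\<forall>x\<in>X. norm x \<le> R"
  proof
    fix x assume "x \<in> X"
    then have "\<And>i. norm (x $ i) \<le> r i" using r unfolding X_def by blast
    then have "(\<Sum>i\<in>UNIV. norm (x $ i)) \<le> R" unfolding R_def by (rule sum_mono)
    then show "norm x \<le> R" using norm_vec_le_sum[of x] by linarith
  qed
  have KX: "\<forall>M. rowstoch M \<longrightarrow> (\<forall>x\<in>X. blinfun_apply (PhiB M i) x \<in> Xs i \<times> C)" for i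
  proof (intro allI impI ballI)
    fix M :: "real^'i^'i" and x assume M: "rowstoch M" and x: "x \<in> X"
    have "(\<Sum>j\<in>UNIV. M $ i $ j *\<^sub>R x $ j) \<in> C"
      by (rule convex_sum[OF finite Cc]) (use M x XsC in \<open>auto simp: rowstoch_def X_def\<close>)
    then show "blinfun_apply (PhiB M i) x \<in> Xs i \<times> C" using x unfolding PhiB_apply X_def by auto
  qed
  obtain \<alpha> where al: "\<alpha> > 0" and alm: "\<And>x y. x \<in> X \<Longrightarrow> y \<in> X \<Longrightarrow> (F_inf G x - F_inf G y) \<bullet> (x - y) \<ge> \<alpha> * (norm (x - y))\<^sup>2"
    using A3_smon unfolding strongly_monotone_on_def by blast
  define \<epsilon> where "\<epsilon> = \<alpha> / (2 * N)"
  have ep: "\<epsilon> > 0" unfolding \<epsilon>_def using al Npos by simp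
  have "\<exists>\<delta>>0. \<forall>M. rowstoch M \<longrightarrow> (\<forall>j. \<bar>M $ i $ j - Emat $ i $ j\<bar> \<le> \<delta>) \<longrightarrow>
     (\<forall>x\<in>X. \<forall>y\<in>X. norm ((Fg M G x - Fg Emat G x) $ i - (Fg M G y - Fg Emat G y) $ i) \<le> \<epsilon> * norm (x - y))" for i
    using per_i[where G=G, OF Xc XR KX[of i] Kcomp[of i] A3_C2[of i] ep] by blast
  then obtain \<delta>f where \<delta>f: "\<And>i. \<delta>f i > 0" and \<delta>fP: "\<And>i M. rowstoch M \<Longrightarrow> (\<forall>j. \<bar>M $ i $ j - Emat $ i $ j\<bar> \<le> \<delta>f i) \<Longrightarrow>
     (\<forall>x\<in>X. \<forall>y\<in>X. norm ((Fg M G x - Fg Emat G x) $ i - (Fg M G y - Fg Emat G y) $ i) \<le> \<epsilon> * norm (x - y))"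
    by metis
  obtain \<delta> where dp: "\<delta> > 0" and dle: "\<forall>i\<in>UNIV. \<delta> \<le> \<delta>f i"
    using fin_pos_lb[of UNIV \<delta>f] \<delta>f by auto
  have rsT: "rowstoch T" and csT: "colstoch T" and prT: "\<exists>k. \<forall>i j. matpow T k $ i $ j > 0"
    using A1 unfolding rowstoch_def colstoch_def doubly_stochastic_def primitive_def by auto
  obtain \<nu>0 where \<nu>0: "\<And>\<nu> i j. \<nu> \<ge> \<nu>0 \<Longrightarrow> \<bar>matpow T \<nu> $ i $ j - 1 / real CARD('i)\<bar> \<le> \<delta>"
    using matpow_conv[OF rsT csT prT dp] by blast
  show ?thesis
  proof (intro exI[of _ \<nu>0] allI impI)
    fix \<nu> assume "\<nu> > \<nu>0"
    define M where "M = matpow T \<nu>"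
    have Mrs: "rowstoch M" unfolding M_def by (rule matpow_rowstoch[OF rsT])
    have Mclose: "\<forall>j. \<bar>M $ i $ j - Emat $ i $ j\<bar> \<le> \<delta>f i" for i
      using \<nu>0[of \<nu> i] \<open>\<nu> > \<nu>0\<close> dle unfolding M_def Emat_def by (auto intro: order_trans)
    have lip: "norm ((Fg M G x - Fg Emat G x) - (Fg M G y - Fg Emat G y)) \<le> \<alpha> / 2 * norm (x - y)"
      if x: "x \<in> X" and y: "y \<in> X" for x y
    proof -
      have "norm ((Fg M G x - Fg Emat G x) - (Fg M G y - Fg Emat G y))
          \<le> (\<Sum>i\<in>UNIV. norm (((Fg M G x - Fg Emat G x) - (Fg M G y - Fg Emat G y)) $ i))"
        by (rule norm_vec_le_sum)
      also have "\<dots> \<le> (\<Sum>i\<in>(UNIV::'i set). \<epsilon> * norm (x - y))"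
        by (rule sum_mono) (use \<delta>fP[OF Mrs Mclose] x y in auto)
      also have "\<dots> = \<alpha> / 2 * norm (x - y)" unfolding \<epsilon>_def N_def using Npos by (simp add: N_def)
      finally show ?thesis .
    qed
    show "strongly_monotone_on X (F_nu T \<nu> G)"
      unfolding strongly_monotone_on_def
    proof (intro exI[of _ "\<alpha> / 2"] conjI ballI)
      show "\<alpha> / 2 > 0" using al by simp
      fix x y assume x: "x \<in> X" and y: "y \<in> X"
      define V where "V = (Fg M G x - Fg Emat G x) - (Fg M G y - Fg Emat G y)"
      have e: "F_nu T \<nu> G x - F_nu T \<nu> G y = (F_inf G x - F_inf G y) + V"
        unfolding V_def Fg_nu Fg_inf M_def by simp
      have "\<bar>V \<bullet> (x - y)\<bar> \<le> norm V * norm (x - y)" by (rule Cauchy_Schwarz_ineq2)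
      also have "\<dots> \<le> \<alpha> / 2 * norm (x - y) * norm (x - y)"
        using lip[OF x y] unfolding V_def by (intro mult_right_mono) auto
      finally have c: "\<bar>V \<bullet> (x - y)\<bar> \<le> \<alpha> / 2 * (norm (x - y))\<^sup>2" by (simp add: power2_eq_square mult.assoc)
      have "(F_nu T \<nu> G x - F_nu T \<nu> G y) \<bullet> (x - y) = (F_inf G x - F_inf G y) \<bullet> (x - y) + V \<bullet> (x - y)"
        unfolding e by (simp add: inner_add_left)
      then show "\<alpha> / 2 * (norm (x - y))\<^sup>2 \<le> (F_nu T \<nu> G x - F_nu T \<nu> G y) \<bullet> (x - y)"
        using alm[OF x y] c by linarith
    qed
  qed
qed

end
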